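(* Let $m\ge2$, $n\ge1$, $k\ge1$ an integer and $\mathcal{A}\in\mathbb{C}^{[m,n]}$. Then $R(\mathcal{A}^k)\le (R(\mathcal{A}))^{\mu_k}$, where $\mu_k=\frac{(m-1)^k-1}{m-2}$ if $m>2$ and $\mu_k=k$ if $m=2$.
   Context: $[n]=\{1,\ldots,n\}$. $\mathbb{C}^{[m,n]}$ denotes the set of order $m$, dimension $n$ complex tensors $\mathcal{A}=(a_{i_1\cdots i_m})$, $i_j\in[n]$. For a tensor $\mathcal{T}=(t_{i_1\cdots i_p})$ of order $p$ and dimension $n$: $r_i(\mathcal{T})=\sum_{i_2,\ldots,i_p=1}^n|t_{ii_2\cdots i_p}|$ and $R(\mathcal{T})=\max_{i\in[n]}r_i(\mathcal{T})$. General product: for $\mathcal{A}\in\mathbb{C}^{[m,n]}$ ($m\ge2$) and $\mathcal{B}\in\mathbb{C}^{[q,n]}$ ($q\ge1$), $\mathcal{A}\mathcal{B}=(c_{i\alpha_1\cdots\alpha_{m-1}})$ is the order $(m-1)(q-1)+1$, dimension $n$ tensor with $c_{i\alpha_1\cdots\alpha_{m-1}}=\sum_{i_2,\ldots,i_m=1}^n a_{ii_2\cdots i_m}b_{i_2\alpha_1}\cdots b_{i_m\alpha_{m-1}}$, $i\in[n]$, $\alpha_j\in[n]^{q-1}$ (where $b_{j\alpha}$ with $\alpha=(j_2,\ldots,j_q)$ means $b_{jj_2\cdots j_q}$). Powers: $\mathcal{A}^1=\mathcal{A}$ and $\mathcal{A}^{j+1}=\mathcal{A}\mathcal{A}^j$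 (general product; this product is associative). *)

theory Defs
  imports Complex_Main
begin

text \<open>An order p, dimension n complex tensor is represented by a function on index
lists; only its values on lists of length p with entries in {0..<n} matter
(0-based indices instead of 1..n).\<close>

type_synonym tensor = "nat list \<Rightarrow> complex"

definition idx :: "nat \<Rightarrow> nat \<Rightarrow> nat list set" where
  "idx n p = {xs. length xs = p \<and> set xs \<subseteq> {..<n}}"

definition row_sum :: "nat \<Rightarrow> nat \<Rightarrow> tensor \<Rightarrow> nat \<Rightarrow> real" where
  "row_sum n p T i = (\<Sum>xs\<in>idx n (p - 1). cmod (T (i # xs)))"

definition Rmax :: "nat \<Rightarrow> nat \<Rightarrow> tensor \<Rightarrow> real" where
  "Rmax n p T = Max ((row_sum n p T) ` {..<n})"

text \<open>General product of A (order m) and B (order q), dimension n; result has order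
(m-1)(q-1)+1, with index list i # alpha_1 @ ... @ alpha_{m-1}, each alpha_j of length q-1.\<close>
definition tprod :: "nat \<Rightarrow> nat \<Rightarrow> nat \<Rightarrow> tensor \<Rightarrow> tensor \<Rightarrow> tensor" where
  "tprod m q n A B xs =
     (\<Sum>js\<in>idx n (m - 1). A (hd xs # js) *
        (\<Prod>j<m - 1. B (js ! j # take (q - 1) (drop (j * (q - 1)) (tl xs)))))"

fun tpow :: "nat \<Rightarrow> nat \<Rightarrow> tensor \<Rightarrow> nat \<Rightarrow> tensor" where
  "tpow m n A 0 = A"
| "tpow m n A (Suc 0) = A"
| "tpow m n A (Suc (Suc j)) = tprod m ((m - 1) ^ Suc j + 1) n A (tpow m n A (Suc j))"

definition mu :: "nat \<Rightarrow> nat \<Rightarrow> nat" where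
  "mu m k = (if m > 2 then ((m - 1) ^ k - 1) div (m - 2) else k)"

end

theory Submission
  imports Defs
begin

lemma finite_idx: "finite (idx n p)"
proof -
  have "idx n p = {xs. set xs \<subseteq> {..<n} \<and> length xs = p}" unfolding idx_def by auto
  then show ?thesis using finite_lists_length_eq[of "{..<n}" p] by simp
qed

lemma idx_add: "idx n (a + b) = (\<lambda>(x,y). x @ y) ` (idx n a \<times> idx n b)"
proof
  show "idx n (a + b) \<subseteq> (\<lambda>(x,y). x @ y) ` (idx n a \<times> idx n b)"
  proof
    fix xs assume xs: "xs \<in> idx n (a + b)"
    have "xs = take a xs @ drop a xs" by simp
    moreover have "(take a xs, drop a xs) \<in> idx n a \<times> idx n b"
      using xs unfolding idx_def by (auto dest: in_set_takeD in_set_dropD)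
    ultimately show "xs \<in> (\<lambda>(x,y). x @ y) ` (idx n a \<times> idx n b)"
      by (metis (no_types, lifting) case_prod_conv image_eqI)
  qed
qed (auto simp: idx_def)

lemma idx_inj: "inj_on (\<lambda>(x,y). x @ y) (idx n a \<times> idx n b)"
  by (auto simp: inj_on_def idx_def)

lemma factor:
  fixes f :: "nat \<Rightarrow> nat list \<Rightarrow> real"
  shows "(\<Sum>xs\<in>idx n (p * L). \<Prod>j<p. f j (take L (drop (j * L) xs)))
       = (\<Prod>j<p. \<Sum>a\<in>idx n L. f j a)"
proof (induction p arbitrary: f)
  case 0
  have "idx n 0 = {[]}" by (auto simp: idx_def)
  then show ?case by simp
next
  case (Suc p)
  have "(\<Sum>xs\<in>idx n (Suc p * L). \<Prod>j<Suc p. f j (take L (drop (j * L) xs)))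
      = (\<Sum>xs\<in>idx n (L + p * L). \<Prod>j<Suc p. f j (take L (drop (j * L) xs)))" by simp
  also have "\<dots> = (\<Sum>(a,b)\<in>idx n L \<times> idx n (p*L). \<Prod>j<Suc p. f j (take L (drop (j * L) (a@b))))"
    unfolding idx_add by (subst sum.reindex[OF idx_inj]) (simp add: case_prod_beta')
  also have "\<dots> = (\<Sum>(a,b)\<in>idx n L \<times> idx n (p*L). f 0 a * (\<Prod>j<p. f (Suc j) (take L (drop (j * L) b))))"
  proof (rule sum.cong[OF refl])
    fix x assume "x \<in> idx n L \<times> idx n (p*L)"
    then obtain a b where x: "x = (a,b)" and la: "length a = L" by (auto simp: idx_def)
    show "(case x of (a,b) \<Rightarrow> \<Prod>j<Suc p. f j (take L (drop (j * L) (a@b))))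
        = (case x of (a,b) \<Rightarrow> f 0 a * (\<Prod>j<p. f (Suc j) (take L (drop (j * L) b))))"
      unfolding x using la by (simp add: prod.lessThan_Suc_shift del: prod.lessThan_Suc)
  qed
  also have "\<dots> = (\<Sum>a\<in>idx n L. f 0 a) * (\<Sum>b\<in>idx n (p*L). \<Prod>j<p. f (Suc j) (take L (drop (j * L) b)))"
    by (simp add: sum_product sum.cartesian_product)
  also have "\<dots> = (\<Sum>a\<in>idx n L. f 0 a) * (\<Prod>j<p. \<Sum>a\<in>idx n L. f (Suc j) a)"
    using Suc.IH[of "\<lambda>j. f (Suc j)"] by simp
  also have "\<dots> = (\<Prod>j<Suc p. \<Sum>a\<in>idx n L. f j a)"
    by (simp only: prod.lessThan_Suc_shift)
  finally show ?case .
qed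

lemma row_sum_nonneg: "row_sum n p T i \<ge> 0"
  unfolding row_sum_def by (simp add: sum_nonneg)

lemma row_le_Rmax: "i < n \<Longrightarrow> row_sum n p T i \<le> Rmax n p T"
  unfolding Rmax_def by (rule Max_ge) auto

lemma Rmax_nonneg: "n \<ge> 1 \<Longrightarrow> Rmax n p T \<ge> 0"
  using row_le_Rmax[of 0 n p T] row_sum_nonneg[of n p T 0] by simp

lemma row_prod:
  assumes "n \<ge> 1"
  shows "row_sum n ((m-1)*(q-1)+1) (tprod m q n A B) i \<le> row_sum n m A i * Rmax n q B ^ (m-1)"
proof -
  let ?L = "q - 1"
  let ?blk = "\<lambda>j xs. take ?L (drop (j * ?L) xs)"
  have "row_sum n ((m-1)*(q-1)+1) (tprod m q n A B) i
      = (\<Sum>xs\<in>idx n ((m-1)*?L). cmod (\<Sum>js\<in>idx n (m - 1). A (i # js) *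
        (\<Prod>j<m - 1. B (js ! j # ?blk j xs))))"
    unfolding row_sum_def tprod_def by simp
  also have "\<dots> \<le> (\<Sum>xs\<in>idx n ((m-1)*?L). \<Sum>js\<in>idx n (m - 1). cmod (A (i # js)) *
        (\<Prod>j<m - 1. cmod (B (js ! j # ?blk j xs))))"
  proof (rule sum_mono)
    fix xs
    show "cmod (\<Sum>js\<in>idx n (m - 1). A (i # js) * (\<Prod>j<m - 1. B (js ! j # ?blk j xs)))
      \<le> (\<Sum>js\<in>idx n (m - 1). cmod (A (i # js)) * (\<Prod>j<m - 1. cmod (B (js ! j # ?blk j xs))))"
      by (rule order_trans[OF norm_sum]) (simp add: norm_mult prod_norm)
  qed
  also have "\<dots> = (\<Sum>js\<in>idx n (m - 1). cmod (A (i # js)) *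
        (\<Sum>xs\<in>idx n ((m-1)*?L). \<Prod>j<m - 1. cmod (B (js ! j # ?blk j xs))))"
    by (subst sum.swap) (simp add: sum_distrib_left)
  also have "\<dots> = (\<Sum>js\<in>idx n (m - 1). cmod (A (i # js)) *
        (\<Prod>j<m - 1. row_sum n q B (js ! j)))"
    unfolding row_sum_def
  proof (rule sum.cong[OF refl])
    fix js
    show "cmod (A (i # js)) * (\<Sum>xs\<in>idx n ((m-1)*?L). \<Prod>j<m - 1. cmod (B (js ! j # ?blk j xs)))
      = cmod (A (i # js)) * (\<Prod>j<m - 1. \<Sum>xs\<in>idx n (q - 1). cmod (B (js ! j # xs)))"
      using factor[where n=n and p="m-1" and L="?L" and f="\<lambda>j a. cmod (B (js ! j # a))"] by simp
  qed
  also have "\<dots> \<le> (\<Sum>js\<in>idx n (m - 1). cmod (A (i # js)) * Rmax n q B ^ (m-1))"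
  proof (rule sum_mono, rule mult_left_mono)
    fix js assume js: "js \<in> idx n (m - 1)"
    have "(\<Prod>j<m - 1. row_sum n q B (js ! j)) \<le> (\<Prod>j<m - 1. Rmax n q B)"
    proof (rule prod_mono)
      fix j assume "j \<in> {..<m-1}"
      then have jl: "j < length js" using js unfolding idx_def by simp
      have "set js \<subseteq> {..<n}" using js unfolding idx_def by simp
      then have "js ! j < n" using nth_mem[OF jl] by blast
      then show "0 \<le> row_sum n q B (js ! j) \<and> row_sum n q B (js ! j) \<le> Rmax n q B"
        using row_sum_nonneg row_le_Rmax by blast
    qed
    then show "(\<Prod>j<m - 1. row_sum n q B (js ! j)) \<le> Rmax n q B ^ (m-1)" by simp
  qed simp
  also have "\<dots> = row_sum n m A i * Rmax n q B ^ (m-1)"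
    unfolding row_sum_def by (simp add: sum_distrib_right)
  finally show ?thesis .
qed

lemma mu_Suc:
  assumes "m \<ge> 2" "k \<ge> 1"
  shows "mu m (Suc k) = 1 + (m - 1) * mu m k"
proof (cases "m > 2")
  case True
  define d where "d = m - 2"
  have m: "m - 1 = d + 1" "m - 2 = d" "d > 0" using True by (auto simp: d_def)
  have key: "(d+1)^k - 1 = d * (\<Sum>i<k. (d+1)^i)" for k
  proof (induction k)
    case (Suc k)
    have p1: "(d+1)^k \<ge> 1" using one_le_power[of "d+1" k] by simp
    have "(d+1)^Suc k - 1 = ((d+1)^k - 1) + d * (d+1)^k"
      using p1 by (simp add: algebra_simps)
    also have "\<dots> = d * (\<Sum>i<k. (d+1)^i) + d * (d+1)^k" using Suc by simp
    also have "\<dots> = d * (\<Sum>i<Suc k. (d+1)^i)" by (simp add: algebra_simps)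
    finally show ?case .
  qed simp
  have e1: "((d+1)^Suc k - 1) div d = (\<Sum>i<Suc k. (d+1)^i)"
    unfolding key using m(3) by simp
  have e2: "((d+1)^k - 1) div d = (\<Sum>i<k. (d+1)^i)"
    unfolding key using m(3) by simp
  have e3: "(\<Sum>i<Suc k. (d+1)^i) = 1 + (d+1) * (\<Sum>i<k. (d+1)^i)"
    by (simp only: sum.lessThan_Suc_shift sum_distrib_left power_Suc power_0)
  have "((d+1)^Suc k - 1) div d = 1 + (d+1) * (((d+1)^k - 1) div d)"
    using e1 e2 e3 by simp
  then show ?thesis using True m unfolding mu_def by simp
next
  case False
  then have "m = 2" using assms by simp
  then show ?thesis unfolding mu_def by simp
qed

theorem corollary2p5:
  fixes m n k :: nat and A :: tensor
  assumes "m \<ge> 2" and "n \<ge> 1" and "k \<ge> 1"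
  shows "Rmax n ((m - 1) ^ k + 1) (tpow m n A k) \<le> (Rmax n m A) ^ (mu m k)"
  using assms(3)
proof (induction k rule: dec_induct)
  case base
  have "mu m 1 = 1"
  proof (cases "m > 2")
    case True
    then have "(m - 1) ^ 1 - 1 = m - 2" by simp
    then show ?thesis using True unfolding mu_def by simp
  qed (simp add: mu_def)
  then show ?case using assms(1) by simp
next
  case (step k)
  obtain j where kj: "k = Suc j" using step(1) by (cases k) auto
  let ?B = "tpow m n A k"
  let ?q = "(m - 1) ^ k + 1"
  have R0: "Rmax n m A \<ge> 0" "Rmax n ?q ?B \<ge> 0" using Rmax_nonneg assms(2) by auto
  have ord: "(m - 1) ^ Suc k + 1 = (m-1)*(?q-1)+1" by simp
  have tp: "tpow m n A (Suc k) = tprod m ?q n A ?B" using kj by simp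
  have "Rmax n ((m - 1) ^ Suc k + 1) (tpow m n A (Suc k)) \<le> Rmax n m A * Rmax n ?q ?B ^ (m-1)"
    unfolding Rmax_def[of n "(m - 1) ^ Suc k + 1"]
  proof (rule Max.boundedI)
    show "finite (row_sum n ((m - 1) ^ Suc k + 1) (tpow m n A (Suc k)) ` {..<n})" by simp
    show "row_sum n ((m - 1) ^ Suc k + 1) (tpow m n A (Suc k)) ` {..<n} \<noteq> {}" using assms(2) by (auto simp: lessThan_empty_iff)
    fix x assume "x \<in> row_sum n ((m - 1) ^ Suc k + 1) (tpow m n A (Suc k)) ` {..<n}"
    then obtain i where i: "i < n" and x: "x = row_sum n ((m - 1) ^ Suc k + 1) (tpow m n A (Suc k)) i" by auto
    have "x \<le> row_sum n m A i * Rmax n ?q ?B ^ (m-1)"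
      unfolding x ord tp by (rule row_prod[OF assms(2)])
    also have "\<dots> \<le> Rmax n m A * Rmax n ?q ?B ^ (m-1)"
      using row_le_Rmax[OF i] R0 by (simp add: mult_right_mono)
    finally show "x \<le> Rmax n m A * Rmax n ?q ?B ^ (m-1)" .
  qed
  also have "\<dots> \<le> Rmax n m A * (Rmax n m A ^ mu m k) ^ (m-1)"
    using step(3) R0 by (simp add: mult_left_mono power_mono)
  also have "\<dots> = Rmax n m A ^ mu m (Suc k)"
  proof -
    have "(Rmax n m A ^ mu m k) ^ (m-1) = Rmax n m A ^ ((m - 1) * mu m k)"
      by (metis power_mult mult.commute)
    then show ?thesis using mu_Suc[OF assms(1) step(1)] by (simp only: power_add power_one_right)
  qed
  finally show ?case .
qed

end
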